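(* Assume $\gamma_0$ is unimodal (and symmetric about $0$) with $\sup_u|\frac{d}{du}\log\gamma_0(u)|\le\Lambda$ a.e. and $\sup_u|\frac{d^2}{du^2}\log\gamma_0(u)|\le\Lambda'$ a.e. for some $\Lambda,\Lambda'>0$. Then there is a constant $C>0$ depending only on $\gamma_0$ such that for all $x\in\mathbb{R}$, $w\in(0,1]$, $c\in\mathbb{R}$, $$\left|\frac{d}{dx}\zeta(x;\theta)\right|\le C\bigl(1+|c|+\log(1/w)\bigr).$$ The same conclusion holds when $\gamma_0$ is the double exponential density $\gamma_0(u)=\frac{\Lambda}{2}e^{-\Lambda|u|}$.
   Context: Let $\phi$ be the standard normal density and $\gamma_0$ a probability density on $\mathbb{R}$. For $\theta=(w,c)$, $w\in(0,1]$, $c\in\mathbb{R}$, let $g(x;c)=\int\phi(x-\mu)\gamma_0(\mu-c)\,d\mu$, $m(x;\theta)=(1-w)\phi(x)+wg(x;c)$, and $\zeta(x;\theta)=x+\frac{d}{dx}\log m(x;\theta)$ (the posterior mean of $\mu$ given $X=x$ under $X\mid\mu\sim N(\mu,1)$ and prior $(1-w)\delta_0+w\gamma_0(\cdot-c)$). *)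

theory Defs
  imports "HOL-Analysis.Analysis"
begin

definition phi :: "real \<Rightarrow> real" where
  "phi x = exp (- (x\<^sup>2) / 2) / sqrt (2 * pi)"

definition gfun :: "(real \<Rightarrow> real) \<Rightarrow> real \<Rightarrow> real \<Rightarrow> real" where
  "gfun gamma0 c x = (LINT mu|lborel. phi (x - mu) * gamma0 (mu - c))"

definition mfun :: "(real \<Rightarrow> real) \<Rightarrow> real \<Rightarrow> real \<Rightarrow> real \<Rightarrow> real" where
  "mfun gamma0 w c x = (1 - w) * phi x + w * gfun gamma0 c x"

definition zeta :: "(real \<Rightarrow> real) \<Rightarrow> real \<Rightarrow> real \<Rightarrow> real \<Rightarrow> real" where
  "zeta gamma0 w c x = x + deriv (\<lambda>y. ln (mfun gamma0 w c y)) x"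

definition prob_density :: "(real \<Rightarrow> real) \<Rightarrow> bool" where
  "prob_density gamma0 \<longleftrightarrow> gamma0 \<in> borel_measurable borel \<and> (\<forall>u. 0 \<le> gamma0 u)
     \<and> integrable lborel gamma0 \<and> (LINT u|lborel. gamma0 u) = 1"

end

theory Submission imports Defs "HOL-Probability.Probability" begin


lemma lip_from_deriv:
  fixes k k' :: "real \<Rightarrow> real"
  assumes kd: "\<And>s. (k has_real_derivative k' s) (at s)"
    and kb: "\<And>s. \<bar>k' s\<bar> \<le> M"
  shows "\<bar>k a - k b\<bar> \<le> M * \<bar>a - b\<bar>"
proof -
  have *: "\<bar>k v - k u\<bar> \<le> M * (v - u)" if uv: "u < v" for u v
  proof -
    obtain z where "k v - k u = (v - u) * k' z"
      using MVT2[OF uv, of k k'] kd by blast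
    then have "\<bar>k v - k u\<bar> = (v - u) * \<bar>k' z\<bar>" using that by (simp add: abs_mult)
    also have "\<dots> \<le> (v - u) * M" using kb[of z] that by (intro mult_left_mono) auto
    finally show ?thesis by (simp add: mult.commute)
  qed
  show ?thesis
  proof (cases a b rule: linorder_cases)
    case less then show ?thesis using *[OF less] by (simp add: abs_minus_commute)
  next
    case equal then show ?thesis by simp
  next
    case greater then show ?thesis using *[OF greater] by simp
  qed
qed

lemma deriv_conv:
  fixes k k' h :: "real \<Rightarrow> real"
  assumes kd: "\<And>s. (k has_real_derivative k' s) (at s)"
    and kb: "\<And>s. \<bar>k' s\<bar> \<le> M"
    and kb0: "\<And>s. \<bar>k s\<bar> \<le> M0"
    and km[measurable]: "k \<in> borel_measurable borel" "k' \<in> borel_measurable borel"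
    and hm[measurable]: "h \<in> borel_measurable borel"
    and hi: "integrable lborel h"
  shows "((\<lambda>y. LINT \<mu>|lborel. k (y - \<mu>) * h \<mu>) has_real_derivative
           (LINT \<mu>|lborel. k' (x - \<mu>) * h \<mu>)) (at x)"
proof -
  have intk: "integrable lborel (\<lambda>\<mu>. k (y - \<mu>) * h \<mu>)" for y
    by (rule Bochner_Integration.integrable_bound[OF integrable_mult_right[OF hi, of M0]])
       (auto simp: abs_mult intro!: mult_right_mono order_trans[OF kb0])
  show ?thesis
    unfolding has_field_derivative_iff tendsto_at_iff_sequentially
  proof (intro allI impI)
    fix X :: "nat \<Rightarrow> real"
    assume X: "\<forall>i. X i \<in> UNIV - {x}" and Xl: "X \<longlonglongrightarrow> x"
    define s where "s i \<mu> = (k (X i - \<mu>) - k (x - \<mu>)) / (X i - x) * h \<mu>" for i \<mu>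
    have eq: "((\<lambda>y. ((LINT \<mu>|lborel. k (y - \<mu>) * h \<mu>) - (LINT \<mu>|lborel. k (x - \<mu>) * h \<mu>)) / (y - x)) \<circ> X) i
        = (LINT \<mu>|lborel. s i \<mu>)" for i
    proof -
      have "s i = (\<lambda>\<mu>. (k (X i - \<mu>) * h \<mu> - k (x - \<mu>) * h \<mu>) / (X i - x))"
        by (auto simp: s_def field_simps)
      then show ?thesis using intk by simp
    qed
    have "(\<lambda>i. LINT \<mu>|lborel. s i \<mu>) \<longlonglongrightarrow> (LINT \<mu>|lborel. k' (x - \<mu>) * h \<mu>)"
    proof (rule integral_dominated_convergence[where w="\<lambda>\<mu>. M * \<bar>h \<mu>\<bar>"])
      show "(\<lambda>\<mu>. k' (x - \<mu>) * h \<mu>) \<in> borel_measurable lborel" by measurable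
      show "s i \<in> borel_measurable lborel" for i unfolding s_def by measurable
      show "integrable lborel (\<lambda>\<mu>. M * \<bar>h \<mu>\<bar>)" using hi by auto
      show "AE \<mu> in lborel. (\<lambda>i. s i \<mu>) \<longlonglongrightarrow> k' (x - \<mu>) * h \<mu>"
        unfolding s_def
      proof (intro AE_I2 tendsto_mult_right)
        fix \<mu>
        have "((\<lambda>y. (k y - k (x - \<mu>)) / (y - (x - \<mu>))) \<longlongrightarrow> k' (x - \<mu>)) (at (x - \<mu>))"
          using kd[of "x - \<mu>"] unfolding has_field_derivative_iff .
        moreover have "\<forall>i. X i - \<mu> \<in> UNIV - {x - \<mu>}" using X by auto
        moreover have "(\<lambda>i. X i - \<mu>) \<longlonglongrightarrow> x - \<mu>" using Xl by (intro tendsto_intros)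
        ultimately have "((\<lambda>y. (k y - k (x - \<mu>)) / (y - (x - \<mu>))) \<circ> (\<lambda>i. X i - \<mu>)) \<longlonglongrightarrow> k' (x - \<mu>)"
          unfolding tendsto_at_iff_sequentially by (elim allE[where x="\<lambda>i. X i - \<mu>"] impE)
        then show "(\<lambda>i. (k (X i - \<mu>) - k (x - \<mu>)) / (X i - x)) \<longlonglongrightarrow> k' (x - \<mu>)"
          by (simp add: comp_def)
      qed
      show "AE \<mu> in lborel. norm (s i \<mu>) \<le> M * \<bar>h \<mu>\<bar>" for i
      proof (intro AE_I2)
        fix \<mu>
        have d: "X i - x \<noteq> 0" using X by auto
        have "\<bar>k (X i - \<mu>) - k (x - \<mu>)\<bar> \<le> M * \<bar>X i - x\<bar>"
          using lip_from_deriv[OF kd kb, of "X i - \<mu>" "x - \<mu>"] by simp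
        then have "\<bar>(k (X i - \<mu>) - k (x - \<mu>)) / (X i - x)\<bar> \<le> M"
          using d by (simp add: divide_le_eq abs_divide)
        then show "norm (s i \<mu>) \<le> M * \<bar>h \<mu>\<bar>"
        proof -
          have "norm (s i \<mu>) = \<bar>(k (X i - \<mu>) - k (x - \<mu>)) / (X i - x)\<bar> * \<bar>h \<mu>\<bar>"
            unfolding s_def by (simp add: abs_mult)
          also have "\<dots> \<le> M * \<bar>h \<mu>\<bar>" by (rule mult_right_mono) (use \<open>\<bar>(k (X i - \<mu>) - k (x - \<mu>)) / (X i - x)\<bar> \<le> M\<close> in auto)
          finally show ?thesis .
        qed
      qed
    qed
    then show "((\<lambda>y. ((LINT \<mu>|lborel. k (y - \<mu>) * h \<mu>) - (LINT \<mu>|lborel. k (x - \<mu>) * h \<mu>)) / (y - x)) \<circ> X)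
        \<longlonglongrightarrow> (LINT \<mu>|lborel. k' (x - \<mu>) * h \<mu>)"
      using eq by (simp add: comp_def)
  qed
qed



definition k1 :: "real \<Rightarrow> real" where "k1 s = - s * phi s"
definition k2 :: "real \<Rightarrow> real" where "k2 s = (s\<^sup>2 - 1) * phi s"

lemma phi_pos: "0 < phi s" by (simp add: phi_def)

lemma phi_meas[measurable]: "phi \<in> borel_measurable borel"
  unfolding phi_def by measurable
lemma k1_meas[measurable]: "k1 \<in> borel_measurable borel"
  unfolding k1_def by measurable
lemma k2_meas[measurable]: "k2 \<in> borel_measurable borel"
  unfolding k2_def by measurable

lemma phi_alt: "phi = (\<lambda>s. (1 / sqrt (2 * pi)) * exp (- (s\<^sup>2) / 2))"
  unfolding phi_def[abs_def] by simp

lemma phi_deriv: "(phi has_real_derivative k1 s) (at s)"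
proof -
  have "((\<lambda>s. (1 / sqrt (2 * pi)) * exp (- (s\<^sup>2) / 2)) has_real_derivative
     (1 / sqrt (2 * pi)) * (exp (- (s\<^sup>2) / 2) * (- (2 * s) / 2))) (at s)"
  proof -
    have sq: "sqrt (2 * pi) * sqrt (2 * pi) = 2 * pi" by simp
    have "exp (- (s\<^sup>2 / 2)) * s * sqrt (2 * pi) / (2 * pi) = exp (- (s\<^sup>2 / 2)) * s / sqrt (2 * pi)"
      by (subst sq[symmetric]) (simp add: field_simps)
    then show ?thesis by (auto intro!: derivative_eq_intros)
  qed
  moreover have "(1 / sqrt (2 * pi)) * (exp (- (s\<^sup>2) / 2) * (- (2 * s) / 2)) = - s * ((1 / sqrt (2 * pi)) * exp (- (s\<^sup>2) / 2))"
    by (simp add: algebra_simps)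
  ultimately show ?thesis unfolding phi_alt k1_def by (simp add: mult.commute)
qed

lemma k1_deriv: "(k1 has_real_derivative k2 s) (at s)"
proof -
  have "((\<lambda>s. - s * phi s) has_real_derivative (- 1 * phi s + k1 s * - s)) (at s)"
    by (rule DERIV_mult[OF DERIV_minus[OF DERIV_ident] phi_deriv])
  moreover have "- 1 * phi s + k1 s * - s = k2 s"
    unfolding k1_def k2_def by (simp add: algebra_simps power2_eq_square)
  ultimately show ?thesis unfolding k1_def[abs_def] by simp
qed

lemma phi_le_exp: "phi s \<le> exp (- (s\<^sup>2) / 2)"
proof -
  have "1 \<le> sqrt (2 * pi)" using pi_gt3 by (simp add: real_le_rsqrt)
  then show ?thesis unfolding phi_def
    using mult_left_mono[of 1 "sqrt (2 * pi)" "exp (- (s\<^sup>2) / 2)"] by (simp add: divide_le_eq)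
qed

lemma mul_exp_neg: "a \<le> M * exp t \<Longrightarrow> a * exp (- t) \<le> (M::real)"
proof -
  assume "a \<le> M * exp t"
  then have "a * exp (- t) \<le> M * exp t * exp (- t)" by (rule mult_right_mono) simp
  also have "\<dots> = M" by (simp add: exp_minus)
  finally show ?thesis .
qed

lemma phi_le1: "phi s \<le> 1"
proof -
  have "- (s\<^sup>2) / 2 \<le> 0" by simp
  then have "exp (- (s\<^sup>2) / 2) \<le> 1" by (simp del: exp_le_one_iff add: exp_le_one_iff)
  then show ?thesis using phi_le_exp[of s] by linarith
qed

lemma k1_bound: "\<bar>k1 s\<bar> \<le> 1"
proof -
  have "\<bar>s\<bar> \<le> 1 + s\<^sup>2 / 2"
    using sum_squares_ge_zero[of "\<bar>s\<bar> - 1" 0] by (simp add: power2_eq_square algebra_simps)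
  also have "\<dots> \<le> 1 * exp (s\<^sup>2/2)" by simp
  finally have "\<bar>s\<bar> * exp (- (s\<^sup>2/2)) \<le> 1" by (rule mul_exp_neg)
  moreover have "\<bar>s\<bar> * phi s \<le> \<bar>s\<bar> * exp (- (s\<^sup>2/2))"
    using phi_le_exp[of s] by (intro mult_left_mono) auto
  ultimately show ?thesis using phi_pos[of s] by (simp add: k1_def abs_mult)
qed

lemma k2_bound: "\<bar>k2 s\<bar> \<le> 2"
proof -
  have "1 + s\<^sup>2 \<le> 2 * (1 + s\<^sup>2 / 2)" by simp
  also have "\<dots> \<le> 2 * exp (s\<^sup>2/2)" using exp_ge_add_one_self[of "s\<^sup>2/2"] by (intro mult_left_mono) auto
  finally have "(1 + s\<^sup>2) * exp (- (s\<^sup>2/2)) \<le> 2" by (rule mul_exp_neg)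
  moreover have "(1 + s\<^sup>2) * phi s \<le> (1 + s\<^sup>2) * exp (- (s\<^sup>2/2))"
    using phi_le_exp[of s] by (intro mult_left_mono) auto
  moreover have "\<bar>s\<^sup>2 - 1\<bar> \<le> 1 + s\<^sup>2" using zero_le_power2[of s] by linarith
  then have "\<bar>k2 s\<bar> \<le> (1 + s\<^sup>2) * phi s"
    using phi_pos[of s] unfolding k2_def abs_mult abs_of_pos[OF phi_pos] by (intro mult_right_mono) auto
  ultimately show ?thesis by linarith
qed

lemma exp_quarter_integrable: "integrable lborel (\<lambda>s::real. exp (- (s\<^sup>2 / 4)))"
proof -
  have "integrable lborel (\<lambda>s. sqrt (4 * pi) * normal_density 0 (sqrt 2) s)" by auto
  moreover have "sqrt (4 * pi) * normal_density 0 (sqrt 2) s = exp (- (s\<^sup>2 / 4))" for s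
    unfolding normal_density_def by simp
  ultimately show ?thesis by simp
qed

definition Efun :: "real \<Rightarrow> real \<Rightarrow> real" where
  "Efun L s = (1 + s\<^sup>2) * phi s * exp (L * \<bar>s\<bar>)"

lemma Efun_meas[measurable]: "Efun L \<in> borel_measurable borel"
  unfolding Efun_def by measurable

lemma Efun_bound:
  assumes L: "0 \<le> L"
  shows "Efun L s \<le> 9 * exp (4 * L\<^sup>2) * exp (- (s\<^sup>2 / 4))"
proof -
  have a: "L * \<bar>s\<bar> \<le> s\<^sup>2 / 16 + 4 * L\<^sup>2"
    using sum_squares_ge_zero[of "\<bar>s\<bar> / 4 - 2 * L" 0] by (simp add: power2_eq_square algebra_simps)
  have b: "1 + s\<^sup>2 \<le> 9 * exp (s\<^sup>2 / 8)"
  proof -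
    have h1: "1 + s\<^sup>2/8 \<le> exp (s\<^sup>2/8)" by (rule exp_ge_add_one_self)
    have h2: "0 \<le> s\<^sup>2/8" by simp
    from h1 h2 show ?thesis by linarith
  qed
  have "Efun L s \<le> (1 + s\<^sup>2) * exp (- (s\<^sup>2) / 2) * exp (L * \<bar>s\<bar>)"
    unfolding Efun_def using phi_le_exp[of s] by (intro mult_right_mono mult_left_mono) auto
  also have "\<dots> \<le> (9 * exp (s\<^sup>2 / 8)) * exp (- (s\<^sup>2) / 2) * exp (s\<^sup>2 / 16 + 4 * L\<^sup>2)"
    using a b by (intro mult_mono) auto
  also have "\<dots> = 9 * exp (4 * L\<^sup>2) * exp (- (5 * s\<^sup>2) / 16)"
    by (simp add: mult_exp_exp[symmetric] del: mult_exp_exp) (simp add: mult_exp_exp field_simps)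
  also have "\<dots> \<le> 9 * exp (4 * L\<^sup>2) * exp (- (s\<^sup>2 / 4))"
    by (intro mult_left_mono) auto
  finally show ?thesis .
qed

lemma Efun_nonneg: "0 \<le> Efun L s"
  unfolding Efun_def using phi_pos[of s] by simp

lemma Efun_integrable:
  assumes L: "0 \<le> L"
  shows "integrable lborel (Efun L)"
  by (rule Bochner_Integration.integrable_bound[OF integrable_mult_right[OF exp_quarter_integrable, of "9 * exp (4 * L\<^sup>2)"]])
     (auto intro!: AE_I2 simp: Efun_nonneg Efun_bound[OF L])

lemma Efun_shift_integrable:
  assumes L: "0 \<le> L"
  shows "integrable lborel (\<lambda>\<mu>. Efun L (x - \<mu>))"
  using lborel_integrable_real_affine[OF Efun_integrable[OF L], of "-1" x] by simp

lemma Efun_shift_integral: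
  "(LINT \<mu>|lborel. Efun L (x - \<mu>)) = (LINT s|lborel. Efun L s)"
  using lborel_integral_real_affine[of "-1" "Efun L" x] by simp



definition Iop :: "(real \<Rightarrow> real) \<Rightarrow> (real \<Rightarrow> real) \<Rightarrow> real \<Rightarrow> real \<Rightarrow> real" where
  "Iop k \<gamma> c y = (LINT \<mu>|lborel. k (y - \<mu>) * \<gamma> (\<mu> - c))"

lemma phi_abs_le1: "\<bar>phi s\<bar> \<le> 1"
  using phi_le1[of s] phi_pos[of s] by simp

context
  fixes \<gamma> :: "real \<Rightarrow> real" and L :: real
  assumes gm[measurable]: "\<gamma> \<in> borel_measurable borel"
    and gpos: "\<And>u. 0 < \<gamma> u"
    and gi: "integrable lborel \<gamma>"
    and Lpos: "0 < L"
    and glip: "\<And>u v. \<gamma> u \<le> \<gamma> v * exp (L * \<bar>u - v\<bar>)"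
begin

lemma gshift_integrable: "integrable lborel (\<lambda>\<mu>. \<gamma> (\<mu> - c))"
  using lborel_integrable_real_affine[OF gi, of 1 "-c"] by simp

lemma I_deriv0: "(Iop phi \<gamma> c has_real_derivative Iop k1 \<gamma> c x) (at x)"
  unfolding Iop_def[abs_def]
  by (rule deriv_conv[OF phi_deriv k1_bound phi_abs_le1 _ _ _ gshift_integrable]) auto

lemma I_deriv1: "(Iop k1 \<gamma> c has_real_derivative Iop k2 \<gamma> c x) (at x)"
  unfolding Iop_def[abs_def]
  by (rule deriv_conv[OF k1_deriv k2_bound k1_bound _ _ _ gshift_integrable]) auto

lemma kint: 
  assumes [measurable]: "k \<in> borel_measurable borel" and kb: "\<And>s. \<bar>k s\<bar> \<le> M"
  shows "integrable lborel (\<lambda>\<mu>. k (x - \<mu>) * \<gamma> (\<mu> - c))"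
  by (rule Bochner_Integration.integrable_bound[OF integrable_mult_right[OF gshift_integrable, of M]])
     (auto intro!: AE_I2 simp: abs_mult intro!: mult_right_mono order_trans[OF kb])

lemma glow: "\<gamma> v * exp (- (L * \<bar>u - v\<bar>)) \<le> \<gamma> u"
proof -
  have "\<gamma> v * exp (- (L * \<bar>u - v\<bar>)) \<le> \<gamma> u * exp (L * \<bar>v - u\<bar>) * exp (- (L * \<bar>u - v\<bar>))"
    using glip[of v u] by (intro mult_right_mono) auto
  also have "\<dots> = \<gamma> u" by (simp add: abs_minus_commute exp_minus)
  finally show ?thesis .
qed

definition Aconst where "Aconst = (LINT s|lborel. Efun L s)"
definition Bconst where "Bconst = (LINT s|lborel. phi s * exp (- (L * \<bar>s\<bar>)))"

lemma B_integrable: "integrable lborel (\<lambda>s. phi s * exp (- (L * \<bar>s\<bar>)))"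
proof (rule Bochner_Integration.integrable_bound[OF Efun_integrable[of L]])
  show "0 \<le> L" using Lpos by simp
  show "(\<lambda>s. phi s * exp (- (L * \<bar>s\<bar>))) \<in> borel_measurable lborel" by measurable
  show "AE x in lborel. norm (phi x * exp (- (L * \<bar>x\<bar>))) \<le> norm (Efun L x)"
  proof (intro AE_I2)
    fix s
    have "phi s * exp (- (L * \<bar>s\<bar>)) \<le> phi s * 1"
      using phi_pos[of s] Lpos by (intro mult_left_mono) auto
    also have "\<dots> \<le> Efun L s"
      unfolding Efun_def using phi_pos[of s] Lpos
      by (intro mult_mono) (auto simp: mult_le_cancel_right1)
    finally show "norm (phi s * exp (- (L * \<bar>s\<bar>))) \<le> norm (Efun L s)"
      using phi_pos[of s] Efun_nonneg[of L s] by simp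
  qed
qed

lemma B_pos: "0 < Bconst"
proof -
  have nn: "AE s in lborel. 0 \<le> phi s * exp (- (L * \<bar>s\<bar>))"
    using phi_pos by (auto intro!: AE_I2 less_imp_le)
  have pos: "0 < phi s * exp (- (L * \<bar>s\<bar>))" for s
    using phi_pos[of s] by simp
  have "Bconst \<noteq> 0"
  proof
    assume "Bconst = 0"
    then have "AE s in lborel. phi s * exp (- (L * \<bar>s\<bar>)) = 0"
      using integral_nonneg_eq_0_iff_AE[OF B_integrable nn] unfolding Bconst_def by simp
    then have "AE s::real in lborel. False" 
      by (rule AE_mp) (use phi_pos in \<open>auto intro!: AE_I2 simp: less_irrefl\<close>, metis less_irrefl)
    then have "(UNIV::real set) \<in> null_sets lborel"
      using AE_iff_null[of "lborel::real measure" "\<lambda>x. False"] by simp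
    then show False by (simp add: null_sets_def)
  qed
  moreover have "0 \<le> Bconst" unfolding Bconst_def using nn by (rule integral_nonneg_AE)
  ultimately show ?thesis by simp
qed

lemma onesq_phi: "(1 + s\<^sup>2) * phi s \<le> 2"
proof -
  have "1 + s\<^sup>2 \<le> 2 * (1 + s\<^sup>2 / 2)" by simp
  also have "\<dots> \<le> 2 * exp (s\<^sup>2/2)" using exp_ge_add_one_self[of "s\<^sup>2/2"] by (intro mult_left_mono) auto
  finally have "(1 + s\<^sup>2) * exp (- (s\<^sup>2/2)) \<le> 2" by (rule mul_exp_neg)
  moreover have "(1 + s\<^sup>2) * phi s \<le> (1 + s\<^sup>2) * exp (- (s\<^sup>2/2))"
    using phi_le_exp[of s] by (intro mult_left_mono) auto
  ultimately show ?thesis by linarith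
qed

lemma Ibound_gen:
  assumes km[measurable]: "k \<in> borel_measurable borel" and kb: "\<And>s. \<bar>k s\<bar> \<le> (1 + s\<^sup>2) * phi s"
  shows "\<bar>Iop k \<gamma> c x\<bar> \<le> \<gamma> (x - c) * Aconst"
proof -
  have kb2: "\<bar>k s\<bar> \<le> 2" for s using kb[of s] onesq_phi[of s] by linarith
  have pw: "\<bar>k (x - \<mu>) * \<gamma> (\<mu> - c)\<bar> \<le> Efun L (x - \<mu>) * \<gamma> (x - c)" for \<mu>
  proof -
    have "\<bar>k (x - \<mu>) * \<gamma> (\<mu> - c)\<bar> = \<bar>k (x - \<mu>)\<bar> * \<gamma> (\<mu> - c)"
      using gpos[of "\<mu> - c"] by (simp add: abs_mult)
    also have "\<dots> \<le> ((1 + (x - \<mu>)\<^sup>2) * phi (x - \<mu>)) * (\<gamma> (x - c) * exp (L * \<bar>x - \<mu>\<bar>))"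
      using glip[of "\<mu> - c" "x - c"] kb[of "x - \<mu>"] gpos[of "\<mu> - c"]
      by (intro mult_mono) (auto simp: abs_minus_commute)
    also have "\<dots> = Efun L (x - \<mu>) * \<gamma> (x - c)" unfolding Efun_def by simp
    finally show ?thesis .
  qed
  have "\<bar>Iop k \<gamma> c x\<bar> \<le> (LINT \<mu>|lborel. \<bar>k (x - \<mu>) * \<gamma> (\<mu> - c)\<bar>)"
    unfolding Iop_def by (rule integral_abs_bound)
  also have "\<dots> \<le> (LINT \<mu>|lborel. Efun L (x - \<mu>) * \<gamma> (x - c))"
    using pw kint[OF km kb2, of x c] Efun_shift_integrable[of L x] Lpos
    by (intro integral_mono) auto
  also have "\<dots> = \<gamma> (x - c) * Aconst"
    unfolding Aconst_def using Efun_shift_integral[of L x] by simp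
  finally show ?thesis .
qed

lemma I0_lower: "\<gamma> (x - c) * Bconst \<le> Iop phi \<gamma> c x"
proof -
  have bi: "integrable lborel (\<lambda>\<mu>. phi (x - \<mu>) * exp (- (L * \<bar>x - \<mu>\<bar>)))"
    using lborel_integrable_real_affine[OF B_integrable, of "-1" x] by simp
  have "\<gamma> (x - c) * Bconst = (LINT \<mu>|lborel. phi (x - \<mu>) * exp (- (L * \<bar>x - \<mu>\<bar>))) * \<gamma> (x - c)"
    unfolding Bconst_def
    using lborel_integral_real_affine[of "-1" "\<lambda>s. phi s * exp (- (L * \<bar>s\<bar>))" x] by simp
  also have "\<dots> = (LINT \<mu>|lborel. phi (x - \<mu>) * exp (- (L * \<bar>x - \<mu>\<bar>)) * \<gamma> (x - c))"
    by simp
  also have "\<dots> \<le> Iop phi \<gamma> c x"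
    unfolding Iop_def
  proof (rule integral_mono)
    show "integrable lborel (\<lambda>\<mu>. phi (x - \<mu>) * exp (- (L * \<bar>x - \<mu>\<bar>)) * \<gamma> (x - c))"
      using bi by simp
    show "integrable lborel (\<lambda>\<mu>. phi (x - \<mu>) * \<gamma> (\<mu> - c))"
      using kint[OF phi_meas phi_abs_le1] .
    fix \<mu>
    have "\<gamma> (x - c) * exp (- (L * \<bar>(\<mu> - c) - (x - c)\<bar>)) \<le> \<gamma> (\<mu> - c)" by (rule glow)
    then have "exp (- (L * \<bar>x - \<mu>\<bar>)) * \<gamma> (x - c) \<le> \<gamma> (\<mu> - c)"
      by (simp add: abs_minus_commute mult.commute)
    then show "phi (x - \<mu>) * exp (- (L * \<bar>x - \<mu>\<bar>)) * \<gamma> (x - c) \<le> phi (x - \<mu>) * \<gamma> (\<mu> - c)"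
      using phi_pos[of "x - \<mu>"] by (simp add: mult.assoc mult_left_mono)
  qed
  finally show ?thesis .
qed

definition mf where "mf w c y = (1 - w) * phi y + w * Iop phi \<gamma> c y"
definition m1f where "m1f w c y = (1 - w) * k1 y + w * Iop k1 \<gamma> c y"
definition m2f where "m2f w c y = (1 - w) * k2 y + w * Iop k2 \<gamma> c y"

lemma mfun_eq: "mfun \<gamma> w c = mf w c"
  unfolding mfun_def[abs_def] gfun_def mf_def Iop_def by simp

lemma m_pos:
  assumes w: "0 < w" "w \<le> 1"
  shows "0 < mf w c y"
proof -
  have "0 < w * (\<gamma> (y - c) * Bconst)"
    using w gpos[of "y - c"] B_pos by simp
  also have "\<dots> \<le> w * Iop phi \<gamma> c y" using I0_lower w by (intro mult_left_mono) auto
  also have "\<dots> \<le> mf w c y" unfolding mf_def using w phi_pos[of y] by simp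
  finally show ?thesis .
qed

lemma m_deriv: "(mf w c has_real_derivative m1f w c y) (at y)"
  unfolding mf_def[abs_def] m1f_def
  by (intro DERIV_add DERIV_cmult phi_deriv I_deriv0)

lemma m1_deriv: "(m1f w c has_real_derivative m2f w c y) (at y)"
  unfolding m1f_def[abs_def] m2f_def
  by (intro DERIV_add DERIV_cmult k1_deriv I_deriv1)

lemma zeta_eq:
  assumes w: "0 < w" "w \<le> 1"
  shows "zeta \<gamma> w c = (\<lambda>y. y + m1f w c y / mf w c y)"
proof
  fix y
  have "((\<lambda>y. ln (mf w c y)) has_real_derivative 1 / mf w c y * m1f w c y) (at y)"
    by (rule DERIV_chain2[OF DERIV_ln_divide[OF m_pos[OF w]] m_deriv])
  then have "deriv (\<lambda>y. ln (mf w c y)) y = m1f w c y / mf w c y"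
    by (simp add: DERIV_imp_deriv)
  then show "zeta \<gamma> w c y = y + m1f w c y / mf w c y"
    unfolding zeta_def mfun_eq by simp
qed

lemma zeta_deriv:
  assumes w: "0 < w" "w \<le> 1"
  shows "(zeta \<gamma> w c has_real_derivative
     1 + (m2f w c x * mf w c x - m1f w c x * m1f w c x) / (mf w c x * mf w c x)) (at x)"
  unfolding zeta_eq[OF w]
  by (intro DERIV_add DERIV_ident DERIV_divide m1_deriv m_deriv) (use m_pos[OF w, of c x] in auto)

definition k3 :: "real \<Rightarrow> real" where "k3 s = s\<^sup>2 * phi s"

lemma k3_meas[measurable]: "k3 \<in> borel_measurable borel" unfolding k3_def by measurable

lemma A_nonneg: "0 \<le> Aconst"
  unfolding Aconst_def by (rule integral_nonneg_AE) (simp add: Efun_nonneg)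

lemma I3_eq: "Iop phi \<gamma> c x + Iop k2 \<gamma> c x = Iop k3 \<gamma> c x"
proof -
  have "Iop phi \<gamma> c x + Iop k2 \<gamma> c x = (LINT \<mu>|lborel. phi (x - \<mu>) * \<gamma> (\<mu> - c) + k2 (x - \<mu>) * \<gamma> (\<mu> - c))"
    unfolding Iop_def
    using kint[OF phi_meas phi_abs_le1, of x c] kint[OF k2_meas k2_bound, of x c] by simp
  also have "\<dots> = Iop k3 \<gamma> c x"
    unfolding Iop_def k3_def k2_def by (simp add: algebra_simps)
  finally show ?thesis .
qed

lemma I1_bound: "\<bar>Iop k1 \<gamma> c x\<bar> \<le> \<gamma> (x - c) * Aconst"
proof (rule Ibound_gen[OF k1_meas])
  fix s :: real
  have "\<bar>s\<bar> \<le> 1 + s\<^sup>2"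
    using sum_squares_ge_zero[of "\<bar>s\<bar> - 1" 0] by (simp add: power2_eq_square algebra_simps)
  then show "\<bar>k1 s\<bar> \<le> (1 + s\<^sup>2) * phi s"
    unfolding k1_def using phi_pos[of s] by (simp add: abs_mult mult_right_mono)
qed

lemma I3_bound: "\<bar>Iop k3 \<gamma> c x\<bar> \<le> \<gamma> (x - c) * Aconst"
  by (rule Ibound_gen[OF k3_meas]) (use phi_pos in \<open>simp add: k3_def abs_mult abs_of_pos[OF phi_pos] mult_right_mono\<close>)

definition Kc where "Kc = 9 * exp (4 * L\<^sup>2) / (\<gamma> 0 * Bconst)"

lemma Q_bound:
  assumes w: "0 < w" "w \<le> 1"
  shows "x\<^sup>2 * ((1 - w) * phi x) / mf w c x \<le> Kc + 4 * (1 + L) * (1 + \<bar>c\<bar> + ln (1 / w))"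
proof -
  define m where "m = mf w c x"
  define a where "a = (1 - w) * phi x"
  define G where "G = \<gamma> (x - c)"
  have mpos: "0 < m" unfolding m_def by (rule m_pos[OF w])
  have a0: "0 \<le> a" unfolding a_def using w phi_pos[of x] by simp
  have Gpos: "0 < G" unfolding G_def by (rule gpos)
  have Bp: "0 < Bconst" by (rule B_pos)
  have g0: "0 < \<gamma> 0" by (rule gpos)
  have am: "a \<le> m" unfolding m_def mf_def a_def
    using w gpos I0_lower[of x c] B_pos
    by (smt (verit) mult_nonneg_nonneg)
  have mlow: "w * G * Bconst \<le> m" unfolding m_def mf_def G_def
    using w I0_lower[of x c] phi_pos[of x]
    by (smt (verit) mult_left_mono mult.assoc mult_nonneg_nonneg)
  have Q1: "x\<^sup>2 * a / m \<le> x\<^sup>2"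
    using am mpos a0 by (simp add: divide_le_eq mult_left_mono)
  have Q2: "x\<^sup>2 * a / m \<le> x\<^sup>2 * phi x / (w * G * Bconst)"
  proof -
    have "x\<^sup>2 * a \<le> x\<^sup>2 * phi x" unfolding a_def using w phi_pos[of x]
      by (intro mult_left_mono) (auto simp: mult_le_cancel_right1)
    moreover have "x\<^sup>2 * phi x / m \<le> x\<^sup>2 * phi x / (w * G * Bconst)"
      using mlow w Gpos Bp phi_pos[of x] mpos by (intro divide_left_mono) auto
    ultimately show ?thesis using mpos by (smt (verit) divide_right_mono)
  qed
  have Glow: "\<gamma> 0 * exp (- (L * \<bar>x\<bar>)) * exp (- (L * \<bar>c\<bar>)) \<le> G"
  proof -
    have "\<gamma> 0 * exp (- (L * \<bar>x - c\<bar>)) \<le> G" unfolding G_def using glow[of 0 "x - c"] by simp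
    moreover have "exp (- (L * \<bar>x\<bar>)) * exp (- (L * \<bar>c\<bar>)) \<le> exp (- (L * \<bar>x - c\<bar>))"
    proof -
      have "\<bar>x - c\<bar> \<le> \<bar>x\<bar> + \<bar>c\<bar>" by (rule abs_triangle_ineq4)
      then have "L * \<bar>x - c\<bar> \<le> L * (\<bar>x\<bar> + \<bar>c\<bar>)" using Lpos
        by (intro mult_left_mono) auto
      then have "- (L * \<bar>x\<bar>) + - (L * \<bar>c\<bar>) \<le> - (L * \<bar>x - c\<bar>)"
        by (simp add: algebra_simps)
      then show ?thesis by (simp add: mult_exp_exp)
    qed
    ultimately show ?thesis using g0 by (smt (verit) mult.assoc mult_left_mono)
  qed
  have Q3: "x\<^sup>2 * phi x / (w * G * Bconst) \<le> Efun L x * exp (L * \<bar>c\<bar>) / (w * \<gamma> 0 * Bconst)"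
  proof -
    have "x\<^sup>2 * phi x / (w * G * Bconst)
        \<le> x\<^sup>2 * phi x / (w * (\<gamma> 0 * exp (- (L * \<bar>x\<bar>)) * exp (- (L * \<bar>c\<bar>))) * Bconst)"
      using Glow w Bp g0 phi_pos[of x] Gpos
      by (intro divide_left_mono mult_right_mono mult_left_mono mult_pos_pos) auto
    also have "\<dots> = (x\<^sup>2 * phi x * exp (L * \<bar>x\<bar>)) * exp (L * \<bar>c\<bar>) / (w * \<gamma> 0 * Bconst)"
      by (simp add: exp_minus field_simps)
    also have "\<dots> \<le> Efun L x * exp (L * \<bar>c\<bar>) / (w * \<gamma> 0 * Bconst)"
      unfolding Efun_def using w g0 Bp phi_pos[of x]
      by (intro divide_right_mono mult_right_mono) auto
    finally show ?thesis .
  qed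
  define S where "S = 1 + \<bar>c\<bar> + ln (1 / w)"
  have lnw: "0 \<le> ln (1 / w)" using w by simp
  show ?thesis
  proof (cases "ln (1 / w) + L * \<bar>c\<bar> \<le> x\<^sup>2 / 4")
    case True
    have "exp (- (x\<^sup>2 / 4)) \<le> exp (- (ln (1 / w) + L * \<bar>c\<bar>))" using True by simp
    also have "\<dots> = w * exp (- (L * \<bar>c\<bar>))"
      using w by (simp add: exp_diff exp_minus ln_div divide_inverse)
    finally have e: "exp (- (x\<^sup>2 / 4)) \<le> w * exp (- (L * \<bar>c\<bar>))" .
    have "Efun L x * exp (L * \<bar>c\<bar>) \<le> 9 * exp (4 * L\<^sup>2) * exp (- (x\<^sup>2 / 4)) * exp (L * \<bar>c\<bar>)"
      using Efun_bound[of L x] Lpos by (intro mult_right_mono) auto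
    also have "\<dots> \<le> 9 * exp (4 * L\<^sup>2) * (w * exp (- (L * \<bar>c\<bar>))) * exp (L * \<bar>c\<bar>)"
      using e by (intro mult_right_mono mult_left_mono) auto
    also have "\<dots> = 9 * exp (4 * L\<^sup>2) * w" by (simp add: exp_minus)
    finally have "Efun L x * exp (L * \<bar>c\<bar>) / (w * \<gamma> 0 * Bconst) \<le> 9 * exp (4 * L\<^sup>2) * w / (w * \<gamma> 0 * Bconst)"
      using w g0 Bp by (intro divide_right_mono) auto
    also have "\<dots> = Kc" unfolding Kc_def using w by simp
    finally have "x\<^sup>2 * a / m \<le> Kc" using Q2 Q3 by linarith
    moreover have "0 \<le> 4 * (1 + L) * S" unfolding S_def using Lpos lnw by simp
    ultimately show ?thesis unfolding a_def m_def S_def by linarith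
  next
    case False
    then have "x\<^sup>2 \<le> 4 * ln (1 / w) + 4 * L * \<bar>c\<bar>" by simp
    also have "\<dots> \<le> 4 * (1 + L) * (1 + \<bar>c\<bar> + ln (1 / w))"
      using Lpos lnw by (simp add: algebra_simps)
    finally have "x\<^sup>2 * a / m \<le> 4 * (1 + L) * (1 + \<bar>c\<bar> + ln (1 / w))" using Q1 by linarith
    moreover have "0 \<le> Kc" unfolding Kc_def using g0 Bp by simp
    ultimately show ?thesis unfolding a_def m_def by linarith
  qed
qed

lemma deriv_bound:
  assumes w: "0 < w" "w \<le> 1"
  shows "\<bar>1 + (m2f w c x * mf w c x - m1f w c x * m1f w c x) / (mf w c x * mf w c x)\<bar>
     \<le> 3 * (x\<^sup>2 * ((1 - w) * phi x) / mf w c x) + Aconst / Bconst + 2 * (Aconst / Bconst)\<^sup>2"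
proof -
  define m where "m = mf w c x"
  define m1 where "m1 = m1f w c x"
  define m2 where "m2 = m2f w c x"
  define a where "a = (1 - w) * phi x"
  define G where "G = \<gamma> (x - c)"
  define R where "R = Aconst / Bconst"
  define Q where "Q = x\<^sup>2 * a / m"
  define P where "P = \<bar>x\<bar> * a / m"
  have mpos: "0 < m" unfolding m_def by (rule m_pos[OF w])
  have a0: "0 \<le> a" unfolding a_def using w phi_pos[of x] by simp
  have Gpos: "0 < G" unfolding G_def by (rule gpos)
  have Bp: "0 < Bconst" by (rule B_pos)
  have A0: "0 \<le> Aconst" by (rule A_nonneg)
  have R0: "0 \<le> R" unfolding R_def using A0 Bp by simp
  have am: "a \<le> m" unfolding m_def mf_def a_def
    using w gpos I0_lower[of x c] B_pos
    by (smt (verit) mult_nonneg_nonneg)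
  have mlow: "w * G * Bconst \<le> m" unfolding m_def mf_def G_def
    using w I0_lower[of x c] phi_pos[of x]
    by (smt (verit) mult_left_mono mult.assoc mult_nonneg_nonneg)
  have wGA: "w * G * Aconst / m \<le> R"
  proof -
    have "w * G * Aconst = R * (w * G * Bconst)" unfolding R_def using Bp by simp
    also have "\<dots> \<le> R * m" using mlow R0 by (rule mult_left_mono)
    finally show ?thesis using mpos by (simp add: divide_le_eq)
  qed
  have m1eq: "m1 = - x * a + w * Iop k1 \<gamma> c x"
    unfolding m1_def m1f_def a_def k1_def by (simp add: algebra_simps)
  have m2eq: "m + m2 = x\<^sup>2 * a + w * Iop k3 \<gamma> c x"
  proof -
    have "m + m2 = (1 - w) * (phi x + k2 x) + w * (Iop phi \<gamma> c x + Iop k2 \<gamma> c x)"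
      unfolding m_def m2_def mf_def m2f_def by (simp add: algebra_simps)
    also have "\<dots> = x\<^sup>2 * a + w * Iop k3 \<gamma> c x"
      unfolding I3_eq a_def k2_def by (simp add: algebra_simps)
    finally show ?thesis .
  qed
  have e1: "1 + (m2 * m - m1 * m1) / (m * m) = (m + m2) / m - (m1 / m)\<^sup>2"
    using mpos by (simp add: field_simps power2_eq_square)
  have b1: "\<bar>m + m2\<bar> / m \<le> Q + R"
  proof -
    have "\<bar>m + m2\<bar> \<le> x\<^sup>2 * a + w * G * Aconst"
    proof -
      have "\<bar>m + m2\<bar> \<le> \<bar>x\<^sup>2 * a\<bar> + \<bar>w * Iop k3 \<gamma> c x\<bar>" unfolding m2eq by (rule abs_triangle_ineq)
      also have "\<bar>x\<^sup>2 * a\<bar> = x\<^sup>2 * a" using a0 by simp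
      also have "\<bar>w * Iop k3 \<gamma> c x\<bar> = w * \<bar>Iop k3 \<gamma> c x\<bar>" using w by (simp add: abs_mult)
      also have "\<dots> \<le> w * (G * Aconst)" unfolding G_def using I3_bound[of c x] w by (intro mult_left_mono) auto
      finally show ?thesis by (simp add: mult.assoc)
    qed
    then have "\<bar>m + m2\<bar> / m \<le> (x\<^sup>2 * a + w * G * Aconst) / m"
      using mpos by (simp add: divide_right_mono)
    also have "\<dots> = Q + w * G * Aconst / m" unfolding Q_def by (simp add: add_divide_distrib)
    finally show ?thesis using wGA by linarith
  qed
  have b2: "\<bar>m1\<bar> / m \<le> P + R"
  proof -
    have "\<bar>m1\<bar> \<le> \<bar>x\<bar> * a + w * G * Aconst"
    proof -
      have "\<bar>m1\<bar> \<le> \<bar>- x * a\<bar> + \<bar>w * Iop k1 \<gamma> c x\<bar>" unfolding m1eq by (rule abs_triangle_ineq)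
      also have "\<bar>- x * a\<bar> = \<bar>x\<bar> * a" using a0 by (simp add: abs_mult)
      also have "\<bar>w * Iop k1 \<gamma> c x\<bar> = w * \<bar>Iop k1 \<gamma> c x\<bar>" using w by (simp add: abs_mult)
      also have "\<dots> \<le> w * (G * Aconst)" unfolding G_def using I1_bound[of c x] w by (intro mult_left_mono) auto
      finally show ?thesis by (simp add: mult.assoc)
    qed
    then have "\<bar>m1\<bar> / m \<le> (\<bar>x\<bar> * a + w * G * Aconst) / m"
      using mpos by (simp add: divide_right_mono)
    also have "\<dots> = P + w * G * Aconst / m" unfolding P_def by (simp add: add_divide_distrib)
    finally show ?thesis using wGA by linarith
  qed
  have PQ: "P\<^sup>2 \<le> Q"
  proof -
    have "P\<^sup>2 = Q * (a / m)" unfolding P_def Q_def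
      by (simp add: power2_eq_square power_divide)
    also have "\<dots> \<le> Q * 1"
      using am mpos a0 unfolding Q_def by (intro mult_left_mono) (auto simp: divide_le_eq)
    finally show ?thesis by simp
  qed
  have P0: "0 \<le> P" unfolding P_def using a0 mpos by simp
  have b3: "(m1 / m)\<^sup>2 \<le> 2 * Q + 2 * R\<^sup>2"
  proof -
    have "(m1 / m)\<^sup>2 = (\<bar>m1\<bar> / m)\<^sup>2" using mpos by (simp add: power2_eq_square abs_mult_self)
    also have "\<dots> \<le> (P + R)\<^sup>2"
      using b2 mpos by (intro power_mono) auto
    also have "\<dots> \<le> 2 * P\<^sup>2 + 2 * R\<^sup>2"
      using sum_squares_ge_zero[of "P - R" 0] by (simp add: power2_eq_square algebra_simps)
    finally show ?thesis using PQ by linarith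
  qed
  have "\<bar>1 + (m2 * m - m1 * m1) / (m * m)\<bar> \<le> \<bar>(m + m2) / m\<bar> + \<bar>(m1 / m)\<^sup>2\<bar>"
    unfolding e1 by (rule abs_triangle_ineq4)
  also have "\<bar>(m + m2) / m\<bar> = \<bar>m + m2\<bar> / m" using mpos by simp
  also have "\<bar>(m1 / m)\<^sup>2\<bar> = (m1 / m)\<^sup>2" by simp
  also have "\<bar>m + m2\<bar> / m + (m1 / m)\<^sup>2 \<le> 3 * Q + R + 2 * R\<^sup>2" using b1 b3 by linarith
  finally show ?thesis unfolding m_def m1_def m2_def Q_def R_def a_def by simp
qed

lemma generic_main:
  "\<exists>C>0. \<forall>x w c. 0 < w \<and> w \<le> 1 \<longrightarrow>
     zeta \<gamma> w c differentiable at x \<and>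
     \<bar>deriv (zeta \<gamma> w c) x\<bar> \<le> C * (1 + \<bar>c\<bar> + ln (1 / w))"
proof -
  define R where "R = Aconst / Bconst"
  define C where "C = 3 * Kc + 12 * (1 + L) + R + 2 * R\<^sup>2 + 1"
  have R0: "0 \<le> R" unfolding R_def using A_nonneg B_pos by simp
  have K0: "0 \<le> Kc" unfolding Kc_def using gpos[of 0] B_pos by simp
  have Cpos: "0 < C" unfolding C_def using R0 K0 Lpos by (simp add: add_pos_nonneg)
  show ?thesis
  proof (intro exI[of _ C] conjI Cpos allI impI)
    fix x w c :: real
    assume w: "0 < w \<and> w \<le> 1"
    then have w1: "0 < w" and w2: "w \<le> 1" by auto
    note d = zeta_deriv[OF w1 w2, of c x]
    show "zeta \<gamma> w c differentiable at x"
      using d real_differentiable_def by blast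
    define S where "S = 1 + \<bar>c\<bar> + ln (1 / w)"
    have S1: "1 \<le> S" unfolding S_def using w1 w2 by simp
    have "\<bar>deriv (zeta \<gamma> w c) x\<bar>
        = \<bar>1 + (m2f w c x * mf w c x - m1f w c x * m1f w c x) / (mf w c x * mf w c x)\<bar>"
      using DERIV_imp_deriv[OF d] by simp
    also have "\<dots> \<le> 3 * (x\<^sup>2 * ((1 - w) * phi x) / mf w c x) + R + 2 * R\<^sup>2"
      unfolding R_def by (rule deriv_bound[OF w1 w2])
    also have "\<dots> \<le> 3 * (Kc + 4 * (1 + L) * S) + R + 2 * R\<^sup>2"
      using Q_bound[OF w1 w2, of x c] unfolding S_def by (intro add_right_mono mult_left_mono) auto
    also have "\<dots> \<le> C * S"
    proof -
      have "3 * Kc + R + 2 * R\<^sup>2 \<le> (3 * Kc + R + 2 * R\<^sup>2) * S"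
        using S1 K0 R0 mult_left_mono[of 1 S "3 * Kc + R + 2 * R\<^sup>2"] by simp
      moreover have "0 \<le> S" using S1 by simp
      ultimately show ?thesis unfolding C_def by (simp add: algebra_simps)
    qed
    finally show "\<bar>deriv (zeta \<gamma> w c) x\<bar> \<le> C * (1 + \<bar>c\<bar> + ln (1 / w))" unfolding S_def .
  qed
qed

end
lemma exp_dens_integrable:
  assumes l: "0 < (l::real)"
  shows "integrable lborel (exponential_density l)"
proof (rule integrableI_nonneg)
  show "exponential_density l \<in> borel_measurable lborel"
    unfolding exponential_density_def[abs_def] by measurable
  show "AE x in lborel. 0 \<le> exponential_density l x"
    using l by (auto intro!: AE_I2 simp: exponential_density_def)
  have "(\<integral>\<^sup>+ x. ennreal (exponential_density l x * x ^ 0) \<partial>lborel) = fact (0 + 0) / (fact 0 * l ^ 0)"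
    by (rule nn_integral_erlang_ith_moment[OF l])
  then show "(\<integral>\<^sup>+ x. ennreal (exponential_density l x) \<partial>lborel) < \<infinity>" by simp
qed

lemma laplace_integrable:
  assumes l: "0 < (l::real)"
  shows "integrable lborel (\<lambda>u. l / 2 * exp (- l * \<bar>u\<bar>))"
proof -
  have i1: "integrable lborel (\<lambda>u. exponential_density l (0 + (-1) * u))"
    by (rule lborel_integrable_real_affine[OF exp_dens_integrable[OF l]]) simp
  have "integrable lborel (\<lambda>u. exponential_density l u + exponential_density l (0 + (-1) * u))"
    using exp_dens_integrable[OF l] i1 by (rule Bochner_Integration.integrable_add)
  then show ?thesis
  proof (rule Bochner_Integration.integrable_bound)
    show "(\<lambda>u. l / 2 * exp (- l * \<bar>u\<bar>)) \<in> borel_measurable lborel" by measurable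
    show "AE x in lborel. norm (l / 2 * exp (- l * \<bar>x\<bar>)) \<le>
        norm (exponential_density l x + exponential_density l (0 + - 1 * x))"
      using l by (auto intro!: AE_I2 simp: exponential_density_def mult.commute)
  qed
qed

theorem mainTheorem10:
  shows
  "(\<forall>(gamma0 :: real \<Rightarrow> real) (psi :: real \<Rightarrow> real) (Lam :: real) (Lam' :: real).
      prob_density gamma0 \<and> (\<forall>u. 0 < gamma0 u)
      \<and> (\<forall>u. gamma0 (- u) = gamma0 u)
      \<and> (\<forall>u v. 0 \<le> u \<and> u \<le> v \<longrightarrow> gamma0 v \<le> gamma0 u)
      \<and> 0 < Lam \<and> 0 < Lam'
      \<and> (\<forall>u. ((\<lambda>t. ln (gamma0 t)) has_real_derivative psi u) (at u))
      \<and> (\<forall>u. \<bar>psi u\<bar> \<le> Lam)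
      \<and> (\<forall>u v. \<bar>psi u - psi v\<bar> \<le> Lam' * \<bar>u - v\<bar>)
      \<longrightarrow> (\<exists>C>0. \<forall>x w c. 0 < w \<and> w \<le> 1 \<longrightarrow>
              zeta gamma0 w c differentiable at x \<and>
              \<bar>deriv (zeta gamma0 w c) x\<bar> \<le> C * (1 + \<bar>c\<bar> + ln (1 / w))))
   \<and>
   (\<forall>Lam :: real. 0 < Lam \<longrightarrow>
      (let gamma0 = (\<lambda>u. Lam / 2 * exp (- Lam * \<bar>u\<bar>)) in
       \<exists>C>0. \<forall>x w c. 0 < w \<and> w \<le> 1 \<longrightarrow>
              zeta gamma0 w c differentiable at x \<and>
              \<bar>deriv (zeta gamma0 w c) x\<bar> \<le> C * (1 + \<bar>c\<bar> + ln (1 / w))))"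
proof (intro conjI allI impI)
  fix gamma0 psi :: "real \<Rightarrow> real" and Lam Lam' :: real
  assume H: "prob_density gamma0 \<and> (\<forall>u. 0 < gamma0 u)
      \<and> (\<forall>u. gamma0 (- u) = gamma0 u)
      \<and> (\<forall>u v. 0 \<le> u \<and> u \<le> v \<longrightarrow> gamma0 v \<le> gamma0 u)
      \<and> 0 < Lam \<and> 0 < Lam'
      \<and> (\<forall>u. ((\<lambda>t. ln (gamma0 t)) has_real_derivative psi u) (at u))
      \<and> (\<forall>u. \<bar>psi u\<bar> \<le> Lam)
      \<and> (\<forall>u v. \<bar>psi u - psi v\<bar> \<le> Lam' * \<bar>u - v\<bar>)"
  then have pd: "prob_density gamma0" and pos: "\<And>u. 0 < gamma0 u" and L: "0 < Lam"
    and dd: "\<And>u. ((\<lambda>t. ln (gamma0 t)) has_real_derivative psi u) (at u)"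
    and pb: "\<And>u. \<bar>psi u\<bar> \<le> Lam" by auto
  have meas: "gamma0 \<in> borel_measurable borel" and int: "integrable lborel gamma0"
    using pd unfolding prob_density_def by auto
  have lip: "gamma0 u \<le> gamma0 v * exp (Lam * \<bar>u - v\<bar>)" for u v
  proof -
    have "\<bar>ln (gamma0 u) - ln (gamma0 v)\<bar> \<le> Lam * \<bar>u - v\<bar>"
      by (rule lip_from_deriv[where k="\<lambda>t. ln (gamma0 t)" and k'=psi, OF dd pb])
    then have "ln (gamma0 u) \<le> ln (gamma0 v) + Lam * \<bar>u - v\<bar>" by linarith
    then have "exp (ln (gamma0 u)) \<le> exp (ln (gamma0 v) + Lam * \<bar>u - v\<bar>)" by simp
    then show ?thesis using pos[of u] pos[of v] by (simp add: exp_add)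
  qed
  show "\<exists>C>0. \<forall>x w c. 0 < w \<and> w \<le> 1 \<longrightarrow>
              zeta gamma0 w c differentiable at x \<and>
              \<bar>deriv (zeta gamma0 w c) x\<bar> \<le> C * (1 + \<bar>c\<bar> + ln (1 / w))"
    by (rule generic_main[OF meas pos int L lip])
next
  fix Lam :: real
  assume L: "0 < Lam"
  define g where "g = (\<lambda>u. Lam / 2 * exp (- Lam * \<bar>u\<bar>))"
  have meas: "g \<in> borel_measurable borel" unfolding g_def by measurable
  have pos: "\<And>u. 0 < g u" unfolding g_def using L by simp
  have int: "integrable lborel g" unfolding g_def by (rule laplace_integrable[OF L])
  have lip: "g u \<le> g v * exp (Lam * \<bar>u - v\<bar>)" for u v
  proof -
    have "\<bar>v\<bar> \<le> \<bar>u\<bar> + \<bar>u - v\<bar>" by linarith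
    then have "Lam * \<bar>v\<bar> \<le> Lam * \<bar>u\<bar> + Lam * \<bar>u - v\<bar>" using L
      by (simp add: distrib_left[symmetric] mult_left_mono)
    then have "- Lam * \<bar>u\<bar> \<le> - Lam * \<bar>v\<bar> + Lam * \<bar>u - v\<bar>" by simp
    then have "exp (- Lam * \<bar>u\<bar>) \<le> exp (- Lam * \<bar>v\<bar>) * exp (Lam * \<bar>u - v\<bar>)"
      by (simp add: exp_add[symmetric])
    then show ?thesis unfolding g_def using L by (simp add: mult.assoc)
  qed
  show "let gamma0 = (\<lambda>u. Lam / 2 * exp (- Lam * \<bar>u\<bar>)) in
       \<exists>C>0. \<forall>x w c. 0 < w \<and> w \<le> 1 \<longrightarrow>
              zeta gamma0 w c differentiable at x \<and>
              \<bar>deriv (zeta gamma0 w c) x\<bar> \<le> C * (1 + \<bar>c\<bar> + ln (1 / w))"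
    unfolding Let_def g_def[symmetric]
    by (rule generic_main[OF meas pos int L lip])
qed

end
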